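(* Let $\Omega$ be a set system on a set $E$ of size $m$, and let $k$ be a positive integer. Then, as polynomials in $q$, $$R_{k\Omega}(q)=\big((1-q)^k+kq(1-q)^{k-1}\big)^m\,R_\Omega\!\left(\frac{kq}{1+(k-1)q}\right).$$
   Context: A set system $\Omega$ on a finite set $E$ is a collection of subsets of $E$ (its faces). Its reliability function $R_\Omega(q)$ is the probability that, when each element of $E$ is selected independently with probability $q$, the set of selected elements is a face. Equivalently, $R_\Omega(q)=\sum_i f_iq^i(1-q)^{|E|-i}$, where $f_i$ is the number of faces of size $i$. For a positive integer $k$, $k\Omega$ is the set system on $E\times\{1,\ldots,k\}$ in which $\{(e_1,i_1),\ldots,(e_r,i_r)\}$ is a face if and only if $e_1,\ldots,e_r$ are pairwise distinct and $\{e_1,\ldots,e_r\}\in\Omega$. *)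

theory Defs
  imports Complex_Main
begin

definition set_system :: "'a set \<Rightarrow> 'a set set \<Rightarrow> bool" where
  "set_system E \<Omega> \<longleftrightarrow> finite E \<and> \<Omega> \<subseteq> Pow E"

definition face_count :: "'a set set \<Rightarrow> nat \<Rightarrow> nat" where
  "face_count \<Omega> i = card {F \<in> \<Omega>. card F = i}"

definition reliability :: "'a set \<Rightarrow> 'a set set \<Rightarrow> real \<Rightarrow> real" where
  "reliability E \<Omega> q = (\<Sum>i = 0..card E. real (face_count \<Omega> i) * q ^ i * (1 - q) ^ (card E - i))"

definition mult_system :: "nat \<Rightarrow> 'a set \<Rightarrow> 'a set set \<Rightarrow> ('a \<times> nat) set set" where
  "mult_system k E \<Omega> = {S. S \<subseteq> E \<times> {1..k} \<and> inj_on fst S \<and> fst ` S \<in> \<Omega>}"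

end

theory Submission
  imports Defs "HOL-Library.FuncSet"
begin

lemma rel_faces:
  assumes "finite E" "\<Omega> \<subseteq> Pow E"
  shows "reliability E \<Omega> q = (\<Sum>F\<in>\<Omega>. q ^ card F * (1 - q) ^ (card E - card F))"
proof -
  have fin: "finite \<Omega>" using assms by (meson finite_Pow_iff finite_subset)
  have cardle: "card ` \<Omega> \<subseteq> {0..card E}"
    using assms by (auto intro!: card_mono)
  have "(\<Sum>F\<in>\<Omega>. q ^ card F * (1 - q) ^ (card E - card F))
      = (\<Sum>i=0..card E. \<Sum>F\<in>{F\<in>\<Omega>. card F = i}. q ^ card F * (1 - q) ^ (card E - card F))"
    using sum.group[OF fin _ cardle, of "\<lambda>F. q ^ card F * (1 - q) ^ (card E - card F)"]
    by simp
  also have "\<dots> = (\<Sum>i=0..card E. real (face_count \<Omega> i) * q ^ i * (1 - q) ^ (card E - i))"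
  proof (rule sum.cong[OF refl])
    fix i
    have "(\<Sum>F\<in>{F\<in>\<Omega>. card F = i}. q ^ card F * (1 - q) ^ (card E - card F))
        = (\<Sum>F\<in>{F\<in>\<Omega>. card F = i}. q ^ i * (1 - q) ^ (card E - i))"
      by (rule sum.cong) auto
    then show "(\<Sum>F\<in>{F\<in>\<Omega>. card F = i}. q ^ card F * (1 - q) ^ (card E - card F))
        = real (face_count \<Omega> i) * q ^ i * (1 - q) ^ (card E - i)"
      by (simp add: face_count_def)
  qed
  finally show ?thesis unfolding reliability_def by simp
qed

lemma fiber_bij:
  assumes "F \<subseteq> E"
  shows "bij_betw (\<lambda>f. (\<lambda>x. (x, f x)) ` F) (F \<rightarrow>\<^sub>E {1..k})
          {S. S \<subseteq> E \<times> {1..k} \<and> inj_on fst S \<and> fst ` S = F}"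
proof (rule bij_betw_imageI)
  show "inj_on (\<lambda>f. (\<lambda>x. (x, f x)) ` F) (F \<rightarrow>\<^sub>E {1..k})"
  proof (rule inj_onI)
    fix f g assume f: "f \<in> F \<rightarrow>\<^sub>E {1..k}" and g: "g \<in> F \<rightarrow>\<^sub>E {1..k}"
      and eq: "(\<lambda>x. (x, f x)) ` F = (\<lambda>x. (x, g x)) ` F"
    show "f = g"
    proof
      fix x show "f x = g x"
      proof (cases "x \<in> F")
        case True
        then have "(x, f x) \<in> (\<lambda>x. (x, g x)) ` F" using eq by blast
        then show ?thesis by auto
      next
        case False then show ?thesis using f g by (auto simp: PiE_def extensional_def)
      qed
    qed
  qed
  show "(\<lambda>f. (\<lambda>x. (x, f x)) ` F) ` (F \<rightarrow>\<^sub>E {1..k}) =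
          {S. S \<subseteq> E \<times> {1..k} \<and> inj_on fst S \<and> fst ` S = F}"
  proof
    show "(\<lambda>f. (\<lambda>x. (x, f x)) ` F) ` (F \<rightarrow>\<^sub>E {1..k}) \<subseteq>
          {S. S \<subseteq> E \<times> {1..k} \<and> inj_on fst S \<and> fst ` S = F}"
      using assms by (auto simp: inj_on_def image_image)
  next
    show "{S. S \<subseteq> E \<times> {1..k} \<and> inj_on fst S \<and> fst ` S = F} \<subseteq>
          (\<lambda>f. (\<lambda>x. (x, f x)) ` F) ` (F \<rightarrow>\<^sub>E {1..k})"
    proof
      fix S assume S: "S \<in> {S. S \<subseteq> E \<times> {1..k} \<and> inj_on fst S \<and> fst ` S = F}"
      define f where "f = restrict (\<lambda>x. SOME j. (x,j) \<in> S) F"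
      have mem: "\<And>x. x \<in> F \<Longrightarrow> (x, f x) \<in> S"
      proof -
        fix x assume "x \<in> F"
        then obtain j where "(x,j) \<in> S" using S by force
        then show "(x, f x) \<in> S" unfolding f_def using \<open>x \<in> F\<close> by (auto intro: someI)
      qed
      have "S = (\<lambda>x. (x, f x)) ` F"
      proof
        show "(\<lambda>x. (x, f x)) ` F \<subseteq> S" using mem by auto
        show "S \<subseteq> (\<lambda>x. (x, f x)) ` F"
        proof
          fix p assume p: "p \<in> S"
          obtain x j where pj: "p = (x,j)" by force
          have xF: "x \<in> F" using S p pj by force
          have "(x, f x) \<in> S" using mem xF .
          then have "j = f x" using S p pj unfolding inj_on_def by force
          then show "p \<in> (\<lambda>x. (x, f x)) ` F" using pj xF by auto
        qed
      qed
      moreover have "f \<in> F \<rightarrow>\<^sub>E {1..k}"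
        using mem S unfolding f_def by auto
      ultimately show "S \<in> (\<lambda>f. (\<lambda>x. (x, f x)) ` F) ` (F \<rightarrow>\<^sub>E {1..k})" by blast
    qed
  qed
qed

theorem lemma6p1:
  fixes E :: "'a set" and \<Omega> :: "'a set set" and k m :: nat and q :: real
  assumes "set_system E \<Omega>" and "card E = m" and "k \<ge> 1"
    and "1 + (real k - 1) * q \<noteq> 0"
  shows "reliability (E \<times> {1..k}) (mult_system k E \<Omega>) q =
         ((1 - q) ^ k + real k * q * (1 - q) ^ (k - 1)) ^ m
           * reliability E \<Omega> (real k * q / (1 + (real k - 1) * q))"
proof -
  have finE: "finite E" and sub: "\<Omega> \<subseteq> Pow E" using assms(1) by (auto simp: set_system_def)
  have fin: "finite \<Omega>" using finE sub by (meson finite_Pow_iff finite_subset)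
  define p where "p = 1 - q"
  define d where "d = 1 + (real k - 1) * q"
  have dnz: "d \<noteq> 0" using assms(4) d_def by simp
  define g where "g = (\<lambda>c::nat. q ^ c * p ^ (m * k - c))"
  have finK: "finite (E \<times> {1..k})" using finE by simp
  have subK: "mult_system k E \<Omega> \<subseteq> Pow (E \<times> {1..k})" by (auto simp: mult_system_def)
  have finM: "finite (mult_system k E \<Omega>)" using finK subK by (meson finite_Pow_iff finite_subset)
  have cK: "card (E \<times> {1..k}) = m * k" using assms(2) by (simp add: card_cartesian_product)
  have L: "reliability (E \<times> {1..k}) (mult_system k E \<Omega>) q
      = (\<Sum>S\<in>mult_system k E \<Omega>. g (card S))"
    using rel_faces[OF finK subK] cK by (simp add: g_def p_def)
  also have "\<dots> = (\<Sum>F\<in>\<Omega>. \<Sum>S\<in>{S\<in>mult_system k E \<Omega>. fst ` S = F}. g (card S))"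
  proof -
    have "(\<lambda>S. fst ` S) ` mult_system k E \<Omega> \<subseteq> \<Omega>" by (auto simp: mult_system_def)
    from sum.group[OF finM fin this, of "\<lambda>S. g (card S)"] show ?thesis by simp
  qed
  also have "\<dots> = (\<Sum>F\<in>\<Omega>. real k ^ card F * g (card F))"
  proof (rule sum.cong[OF refl])
    fix F assume FO: "F \<in> \<Omega>"
    then have FE: "F \<subseteq> E" using sub by auto
    have finF: "finite F" using FE finE finite_subset by blast
    have seteq: "{S\<in>mult_system k E \<Omega>. fst ` S = F} = {S. S \<subseteq> E \<times> {1..k} \<and> inj_on fst S \<and> fst ` S = F}"
      using FO by (auto simp: mult_system_def)
    have cardS: "card {S\<in>mult_system k E \<Omega>. fst ` S = F} = k ^ card F"
      unfolding seteq using bij_betw_same_card[OF fiber_bij[OF FE, of k]]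
      by (simp add: card_PiE finF)
    have "(\<Sum>S\<in>{S\<in>mult_system k E \<Omega>. fst ` S = F}. g (card S))
        = (\<Sum>S\<in>{S\<in>mult_system k E \<Omega>. fst ` S = F}. g (card F))"
    proof (rule sum.cong[OF refl])
      fix S assume "S \<in> {S\<in>mult_system k E \<Omega>. fst ` S = F}"
      then have "inj_on fst S" "fst ` S = F" by (auto simp: mult_system_def)
      then have "card S = card F" using card_image by metis
      then show "g (card S) = g (card F)" by simp
    qed
    then show "(\<Sum>S\<in>{S\<in>mult_system k E \<Omega>. fst ` S = F}. g (card S)) = real k ^ card F * g (card F)"
      using cardS by simp
  qed
  also have "\<dots> = ((1 - q) ^ k + real k * q * (1 - q) ^ (k - 1)) ^ m
           * (\<Sum>F\<in>\<Omega>. (real k * q / d) ^ card F * (1 - real k * q / d) ^ (m - card F))"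
    unfolding sum_distrib_left
  proof (rule sum.cong[OF refl])
    fix F assume "F \<in> \<Omega>"
    then have "card F \<le> m" using sub finE assms(2) by (auto intro: card_mono)
    then obtain c j where cj: "card F = c" "m = c + j" by (metis le_add_diff_inverse)
    obtain k' where k': "k = Suc k'" using assms(3) by (cases k) auto
    have A: "(1 - q) ^ k + real k * q * (1 - q) ^ (k - 1) = p ^ k' * d"
      by (simp add: k' p_def d_def algebra_simps)
    have B: "1 - real k * q / d = p / d"
      using dnz by (simp add: field_simps d_def p_def k')
    have C: "p ^ (m * k - card F) = p ^ j * ((p ^ k') ^ c * (p ^ k') ^ j)"
    proof -
      have "m * k - card F = k' * (c + j) + j" using cj k' by simp
      then show ?thesis by (simp add: power_add power_mult mult.commute)
    qed
    show "real k ^ card F * g (card F) = ((1 - q) ^ k + real k * q * (1 - q) ^ (k - 1)) ^ m *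
           ((real k * q / d) ^ card F * (1 - real k * q / d) ^ (m - card F))"
    proof -
      have "(p ^ k' * d) ^ (c + j) * ((real k * q / d) ^ c * (p / d) ^ (c + j - c))
          = (p ^ k') ^ (c + j) * (d ^ c * d ^ j) * ((real k * q) ^ c / d ^ c * (p ^ j / d ^ j))"
        by (simp add: power_mult_distrib power_divide power_add)
      also have "\<dots> = (p ^ k') ^ (c + j) * (real k * q) ^ c * p ^ j"
        using dnz by (simp add: field_simps)
      finally show ?thesis
        unfolding A B g_def C unfolding cj
        by (simp add: power_mult_distrib power_add mult_ac) (metis (no_types, lifting))
    qed
  qed
  also have "\<dots> = ((1 - q) ^ k + real k * q * (1 - q) ^ (k - 1)) ^ m
           * reliability E \<Omega> (real k * q / (1 + (real k - 1) * q))"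
    using rel_faces[OF finE sub] assms(2) d_def by simp
  finally show ?thesis .
qed

end
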